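(* For $n\ge2$ and all $P,Q\in\Gamma_n$, $D_{h\Delta}(P\|Q)\le \frac34 D_{J\Delta}(P\|Q)$.
   Context: $\Gamma_n=\{P=(p_1,\dots,p_n): p_i>0,\ \sum p_i=1\}$. $h(P\|Q)=\frac12\sum_{i=1}^n(\sqrt{p_i}-\sqrt{q_i})^2$; $\Delta(P\|Q)=\sum_{i=1}^n\frac{(p_i-q_i)^2}{p_i+q_i}$; $J(P\|Q)=\sum_{i=1}^n(p_i-q_i)\ln\frac{p_i}{q_i}$. $D_{h\Delta}=h-\frac14\Delta$, $D_{J\Delta}=\frac18J-\frac14\Delta$. *)

theory Defs
  imports Complex_Main
begin

definition Gamma :: "nat \<Rightarrow> (nat \<Rightarrow> real) set" where
  "Gamma n = {p. (\<forall>i\<in>{1..n}. p i > 0) \<and> (\<Sum>i=1..n. p i) = 1}"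

definition hellinger :: "nat \<Rightarrow> (nat \<Rightarrow> real) \<Rightarrow> (nat \<Rightarrow> real) \<Rightarrow> real" where
  "hellinger n p q = (1/2) * (\<Sum>i=1..n. (sqrt (p i) - sqrt (q i))^2)"

definition triang :: "nat \<Rightarrow> (nat \<Rightarrow> real) \<Rightarrow> (nat \<Rightarrow> real) \<Rightarrow> real" where
  "triang n p q = (\<Sum>i=1..n. (p i - q i)^2 / (p i + q i))"

definition jdiv :: "nat \<Rightarrow> (nat \<Rightarrow> real) \<Rightarrow> (nat \<Rightarrow> real) \<Rightarrow> real" where
  "jdiv n p q = (\<Sum>i=1..n. (p i - q i) * ln (p i / q i))"

definition D_hDelta :: "nat \<Rightarrow> (nat \<Rightarrow> real) \<Rightarrow> (nat \<Rightarrow> real) \<Rightarrow> real" where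
  "D_hDelta n p q = hellinger n p q - (1/4) * triang n p q"

definition D_JDelta :: "nat \<Rightarrow> (nat \<Rightarrow> real) \<Rightarrow> (nat \<Rightarrow> real) \<Rightarrow> real" where
  "D_JDelta n p q = (1/8) * jdiv n p q - (1/4) * triang n p q"

end

theory Submission imports Defs begin

lemma ln_lower:
  fixes s :: real assumes s: "s \<ge> 1"
  shows "(7*s^3-9*s^2+9*s-7)/(3*(s^3+s^2+s+1)) \<le> ln s"
proof -
  define h where "h = (\<lambda>t::real. ln t - (7*t^3-9*t^2+9*t-7)/(3*(t^3+t^2+t+1)))"
  define h' where "h' = (\<lambda>t::real. 1/t - ((21*t^2-18*t+9)*(3*(t^3+t^2+t+1)) - (7*t^3-9*t^2+9*t-7)*(3*(3*t^2+2*t+1)))/(3*(t^3+t^2+t+1))^2)"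
  have d: "(h has_real_derivative h' t) (at t)" if "t \<in> {1..s}" for t
  proof -
    from that have t: "t \<ge> 1" by auto
    have ne: "3*(t^3+t^2+t+1) \<noteq> 0" using t by (smt (verit) power_le_one_iff zero_le_power)
    have p: "((\<lambda>t. 7*t^3-9*t^2+9*t-7) has_real_derivative (21*t^2-18*t+9)) (at t)"
      by (rule derivative_eq_intros refl)+ (simp add: power2_eq_square)
    have q: "((\<lambda>t. 3*(t^3+t^2+t+1)) has_real_derivative (3*(3*t^2+2*t+1))) (at t)"
      by (rule derivative_eq_intros refl)+ (simp add: power2_eq_square)
    show ?thesis unfolding h_def h'_def
      using DERIV_diff[OF DERIV_ln_divide DERIV_divide[OF p q ne]] t by (simp add: power2_eq_square)
  qed
  have nn: "h' t \<ge> 0" if "t \<in> {1..s}" for t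
  proof -
    from that have t: "t \<ge> 1" by auto
    have E: "t^3+t^2+t+1 > 0" using t by (smt (verit) power_le_one_iff zero_le_power)
    define A where "A = ((21*t^2-18*t+9)*(3*(t^3+t^2+t+1)) - (7*t^3-9*t^2+9*t-7)*(3*(3*t^2+2*t+1)))"
    have id: "(3*(t^3+t^2+t+1))^2 - t*A = 3*((t-1)^4*(3*t^2+2*t+3))"
      unfolding A_def by algebra
    have "(t-1)^4*(3*t^2+2*t+3) \<ge> 0" using t by (intro mult_nonneg_nonneg) auto
    hence le: "t*A \<le> (3*(t^3+t^2+t+1))^2" using id by linarith
    have pos: "(3*(t^3+t^2+t+1))^2 > 0" using E by simp
    have "A/(3*(t^3+t^2+t+1))^2 \<le> 1/t"
      using le pos t by (simp add: divide_simps mult.commute)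
    thus ?thesis unfolding h'_def A_def[symmetric] by simp
  qed
  have "h 1 \<le> h s" by (rule deriv_nonneg_imp_mono[OF d nn s]) auto
  moreover have "h 1 = 0" unfolding h_def by simp
  ultimately show ?thesis unfolding h_def by simp
qed

lemma term_ineq_xy:
  fixes x y :: real assumes "y > 0" "x \<ge> y"
  shows "(1/2)*(x-y)^2 \<le> 3/32*(x^2-y^2)*ln (x^2/y^2) + 1/16*(x^2-y^2)^2/(x^2+y^2)"
proof -
  define s where "s = x/y"
  have s1: "s \<ge> 1" using assms unfolding s_def by simp
  have xs: "x = s*y" using assms unfolding s_def by simp
  have l2: "ln (x^2/y^2) = 2*ln s" using assms s1 unfolding s_def
    by (simp add: power_divide[symmetric] ln_realpow)
  have E: "s^3+s^2+s+1 > 0" using s1 by (smt (verit) power_le_one_iff zero_le_power)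
  have g: "(7*s^3-9*s^2+9*s-7)/(3*(s^3+s^2+s+1)) \<le> ln s" by (rule ln_lower[OF s1])
  have ys: "y^2 * (s^2-1) \<ge> 0" using s1 by (simp add: power_le_one_iff)
  have "3/32*(x^2-y^2)*ln (x^2/y^2) = 3/16*(y^2*(s^2-1))*ln s"
    unfolding l2 by (simp add: xs power_mult_distrib algebra_simps)
  also have "\<dots> \<ge> 3/16*(y^2*(s^2-1))*((7*s^3-9*s^2+9*s-7)/(3*(s^3+s^2+s+1)))"
    using g ys by (intro mult_left_mono) auto
  finally have main: "3/32*(x^2-y^2)*ln (x^2/y^2) \<ge> 3/16*(y^2*(s^2-1))*((7*s^3-9*s^2+9*s-7)/(3*(s^3+s^2+s+1)))" .
  have s2: "s^2+1 > 0" by (smt (verit) zero_le_power2)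
  have eq: "3/16*(y^2*(s^2-1))*((7*s^3-9*s^2+9*s-7)/(3*(s^3+s^2+s+1))) + 1/16*(x^2-y^2)^2/(x^2+y^2) = (1/2)*(x-y)^2"
  proof -
    have f: "s^3+s^2+s+1 = (s+1)*(s^2+1)" by algebra
    have e1: "x^2+y^2 = y^2*(s^2+1)" unfolding xs by algebra
    have e2: "(x^2-y^2)^2 = (y^2)^2*(s^2-1)^2" unfolding xs by algebra
    have e3: "(x-y)^2 = y^2*(s-1)^2" unfolding xs by algebra
    have key: "3/16*(y^2*(s^2-1))*((7*s^3-9*s^2+9*s-7)/(3*((s+1)*(s^2+1)))) + 1/16*((y^2)^2*(s^2-1)^2)/(y^2*(s^2+1)) = (1/2)*(y^2*(s-1)^2)"
    proof -
      have ne: "y^2 \<noteq> 0" "s+1 \<noteq> 0" "s^2+1 \<noteq> 0" using assms s1 s2 by auto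
      show ?thesis using ne by (simp add: divide_simps) algebra
    qed
    show ?thesis unfolding e1 e2 e3 f using key .
  qed
  show ?thesis using main eq by linarith
qed


lemma term_ineq_ge:
  fixes a b :: real assumes "b > 0" "a \<ge> b"
  shows "(1/2)*(sqrt a - sqrt b)^2 \<le> 3/32*(a-b)*ln (a/b) + 1/16*(a-b)^2/(a+b)"
proof -
  have "sqrt b > 0" "sqrt a \<ge> sqrt b" using assms by auto
  from term_ineq_xy[OF this] show ?thesis using assms by simp
qed

lemma term_ineq:
  fixes a b :: real assumes "a > 0" "b > 0"
  shows "(1/2)*(sqrt a - sqrt b)^2 \<le> 3/32*((a-b)*ln (a/b)) + 1/16*((a-b)^2/(a+b))"
proof (cases "a \<ge> b")
  case True
  have "3/32*(a-b)*ln(a/b) = 3/32*((a-b)*ln(a/b))" "1/16*(a-b)^2/(a+b) = 1/16*((a-b)^2/(a+b))" by simp_all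
  thus ?thesis using term_ineq_ge[OF assms(2) True] by linarith
next
  case False
  hence "a \<le> b" by simp
  from term_ineq_ge[OF assms(1) this]
  have h: "(1/2)*(sqrt b - sqrt a)^2 \<le> 3/32*(b-a)*ln (b/a) + 1/16*(b-a)^2/(b+a)" .
  have e1: "(b-a)*ln (b/a) = (a-b)*ln(a/b)" using assms by (simp add: ln_div algebra_simps)
  have e2: "(sqrt b - sqrt a)^2 = (sqrt a - sqrt b)^2" "(b-a)^2 = (a-b)^2" "b+a = a+b"
    by (simp_all add: power2_commute)
  have "1/2*(sqrt a - sqrt b)^2 = 1/2*(sqrt b - sqrt a)^2" using e2 by simp
  also have "\<dots> \<le> 3/32*(b-a)*ln (b/a) + 1/16*(b-a)^2/(b+a)" by (rule h)
  also have "\<dots> = 3/32*((b-a)*ln (b/a)) + 1/16*((b-a)^2/(b+a))" by simp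
  also have "\<dots> = 3/32*((a-b)*ln (a/b)) + 1/16*((a-b)^2/(a+b))" unfolding e1 e2 ..
  finally show ?thesis .
qed

theorem proposition5p4:
  fixes n :: nat and P Q :: "nat \<Rightarrow> real"
  assumes "n \<ge> 2" and "P \<in> Gamma n" and "Q \<in> Gamma n"
  shows "D_hDelta n P Q \<le> (3/4) * D_JDelta n P Q"
proof -
  have pos: "P i > 0" "Q i > 0" if "i \<in> {1..n}" for i
    using assms(2,3) that unfolding Gamma_def by auto
  have "hellinger n P Q \<le> 3/32 * jdiv n P Q + 1/16 * triang n P Q"
    unfolding hellinger_def jdiv_def triang_def sum_distrib_left sum.distrib[symmetric]
    by (intro sum_mono) (use term_ineq pos in auto)
  thus ?thesis unfolding D_hDelta_def D_JDelta_def by simp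
qed

end
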